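(* Let $G$ be a $\mathbb{Z}$-graded commutative ring with $G_i=0$ for all $i>0$, and let $H$ be a graded $G$-module such that $H_i$ is an artinian $G_0$-module for all $i\gg0$. Let $X:H\to H$ be a homogeneous $G$-linear map of negative degree. If $\ker(X)$ is almost artinian as a $G$-module, then $H$ is almost artinian as a $G[X]$-module (where the polynomial variable $X$ acts on $H$ via the map $X$).
   Context: For a graded $G$-module $H$ and an integer $r$, $H_{<r}=\bigoplus_{i<r}H_i$ is a graded $G$-submodule and $H_{\ge r}:=H/H_{<r}$. A graded module $H$ over such a ring is almost artinian if there is an integer $r$ such that $H_{\ge r}$ is artinian as a module over that ring. *)

theory Defs
  imports Main "HOL-Computational_Algebra.Polynomial"
begin

text \<open>A Z-graded commutative ring: the ring is the type 'g, the homogeneous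
components are the additive subgroups Gr i, and every element is uniquely a
finitely supported sum of homogeneous components (internal direct sum).\<close>

definition additive_subgroup :: "'a::ab_group_add set \<Rightarrow> bool" where
  "additive_subgroup A \<longleftrightarrow> 0 \<in> A \<and> (\<forall>x\<in>A. \<forall>y\<in>A. x + y \<in> A) \<and> (\<forall>x\<in>A. - x \<in> A)"

definition direct_sum_decomp :: "(int \<Rightarrow> 'a::ab_group_add set) \<Rightarrow> bool" where
  "direct_sum_decomp A \<longleftrightarrow>
     (\<forall>x. \<exists>!f. finite {i. f i \<noteq> 0} \<and> (\<forall>i. f i \<in> A i) \<and> x = (\<Sum>i\<in>{i. f i \<noteq> 0}. f i))"

definition graded_ring :: "(int \<Rightarrow> 'g::comm_ring_1 set) \<Rightarrow> bool" where
  "graded_ring Gr \<longleftrightarrow> (\<forall>i. additive_subgroup (Gr i)) \<and> 1 \<in> Gr 0 \<and>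
     (\<forall>i j. \<forall>a\<in>Gr i. \<forall>b\<in>Gr j. a * b \<in> Gr (i + j)) \<and> direct_sum_decomp Gr"

definition graded_module ::
  "(int \<Rightarrow> 'g::comm_ring_1 set) \<Rightarrow> ('g \<Rightarrow> 'h::ab_group_add \<Rightarrow> 'h) \<Rightarrow> (int \<Rightarrow> 'h set) \<Rightarrow> bool" where
  "graded_module Gr sc Hr \<longleftrightarrow> module sc \<and> (\<forall>i. additive_subgroup (Hr i)) \<and>
     (\<forall>i j. \<forall>a\<in>Gr i. \<forall>x\<in>Hr j. sc a x \<in> Hr (i + j)) \<and> direct_sum_decomp Hr"

definition submod :: "'r set \<Rightarrow> ('r \<Rightarrow> 'h::ab_group_add \<Rightarrow> 'h) \<Rightarrow> 'h set \<Rightarrow> bool" where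
  "submod R act N \<longleftrightarrow> additive_subgroup N \<and> (\<forall>r\<in>R. \<forall>x\<in>N. act r x \<in> N)"

text \<open>The quotient module M/N (N \<subseteq> M submodules) is artinian, i.e. satisfies the
descending chain condition on submodules; submodules of M/N are identified with
the submodules of M containing N (correspondence theorem).\<close>

definition artinian_quot ::
  "'r set \<Rightarrow> ('r \<Rightarrow> 'h::ab_group_add \<Rightarrow> 'h) \<Rightarrow> 'h set \<Rightarrow> 'h set \<Rightarrow> bool" where
  "artinian_quot R act M N \<longleftrightarrow>
     (\<forall>C :: nat \<Rightarrow> 'h set.
        (\<forall>n. submod R act (C n) \<and> N \<subseteq> C n \<and> C n \<subseteq> M \<and> C (Suc n) \<subseteq> C n) \<longrightarrow>
        (\<exists>k. \<forall>n\<ge>k. C n = C k))"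

definition lower_part :: "(int \<Rightarrow> 'h::ab_group_add set) \<Rightarrow> int \<Rightarrow> 'h set" where
  "lower_part Hr r = {x. \<exists>f I. finite I \<and> (\<forall>i\<in>I. i < r \<and> f i \<in> Hr i) \<and> x = (\<Sum>i\<in>I. f i)}"

text \<open>A graded module with components Hr is almost artinian over the ring acting
via act (scalars R): H_{\<ge>r} = H / H_{<r} is artinian for some r.  M is the
underlying module (as a subset of the ambient type).\<close>

definition almost_artinian ::
  "'r set \<Rightarrow> ('r \<Rightarrow> 'h::ab_group_add \<Rightarrow> 'h) \<Rightarrow> 'h set \<Rightarrow> (int \<Rightarrow> 'h set) \<Rightarrow> bool" where
  "almost_artinian R act M Hr \<longleftrightarrow> (\<exists>r. artinian_quot R act M (lower_part Hr r))"

definition poly_act :: "('g::comm_ring_1 \<Rightarrow> 'h::ab_group_add \<Rightarrow> 'h) \<Rightarrow> ('h \<Rightarrow> 'h) \<Rightarrow> 'g poly \<Rightarrow> 'h \<Rightarrow> 'h" where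
  "poly_act sc X p h = (\<Sum>i\<le>degree p. sc (coeff p i) ((X ^^ i) h))"

end

theory Submission
  imports Defs
begin


lemma lp_induct[consumes 1]:
  assumes "x \<in> lower_part Hr r" "P 0"
    "\<And>i y z. i < r \<Longrightarrow> y \<in> Hr i \<Longrightarrow> P z \<Longrightarrow> P (y + z)"
  shows "P x"
proof -
  obtain f I where fI: "finite I" "\<forall>i\<in>I. i < r \<and> f i \<in> Hr i" "x = (\<Sum>i\<in>I. f i)"
    using assms(1) unfolding lower_part_def by blast
  have "(\<forall>i\<in>I. i < r \<and> f i \<in> Hr i) \<longrightarrow> P (\<Sum>i\<in>I. f i)" using fI(1)
  proof (induction I rule: finite_induct)
    case empty then show ?case using assms(2) by simp
  next
    case (insert a F) then show ?case using assms(3) by auto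
  qed
  then show ?thesis using fI by simp
qed

lemma lp_zero: "0 \<in> lower_part Hr r"
  unfolding lower_part_def by (intro CollectI exI[of _ "\<lambda>_. 0"] exI[of _ "{}"]) simp

lemma lp_cons:
  assumes sg: "\<forall>i. additive_subgroup (Hr i)" and "i < r" "a \<in> Hr i" "w \<in> lower_part Hr r"
  shows "a + w \<in> lower_part Hr r"
proof -
  obtain f I where fI: "finite I" "\<forall>i\<in>I. i < r \<and> f i \<in> Hr i" "w = (\<Sum>i\<in>I. f i)"
    using assms(4) unfolding lower_part_def by blast
  show ?thesis
  proof (cases "i \<in> I")
    case True
    have m: "a + f i \<in> Hr i" using sg True fI(2) assms(3) unfolding additive_subgroup_def by blast
    have "(\<Sum>j\<in>I. (f(i := a + f i)) j) = (a + f i) + (\<Sum>j\<in>I-{i}. f j)"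
      using True fI(1) by (simp add: sum.remove)
    also have "\<dots> = a + w" using True fI by (simp add: sum.remove add.assoc)
    finally show ?thesis unfolding lower_part_def using fI m True
      by (intro CollectI exI[of _ "f(i := a + f i)"] exI[of _ I]) auto
  next
    case False
    have "(\<Sum>j\<in>insert i I. (f(i := a)) j) = a + w"
      using False fI by (simp add: sum.insert) (rule sum.cong, auto)
    then show ?thesis unfolding lower_part_def using fI False assms(2,3)
      by (intro CollectI exI[of _ "f(i := a)"] exI[of _ "insert i I"]) auto
  qed
qed

lemma lp_hom: "\<forall>i. additive_subgroup (Hr i) \<Longrightarrow> i < r \<Longrightarrow> a \<in> Hr i \<Longrightarrow> a \<in> lower_part Hr r"
  using lp_cons[of Hr i r a 0] lp_zero[of Hr r] by simp

lemma lp_add: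
  assumes sg: "\<forall>i. additive_subgroup (Hr i)" and "x \<in> lower_part Hr r" "y \<in> lower_part Hr r"
  shows "x + y \<in> lower_part Hr r"
  using assms(2)
  by (induction rule: lp_induct) (auto simp: assms(3) add.assoc intro: lp_cons[OF sg])

lemma lp_sum:
  assumes sg: "\<forall>i. additive_subgroup (Hr i)" and "finite I" "\<And>i. i \<in> I \<Longrightarrow> f i \<in> lower_part Hr r"
  shows "sum f I \<in> lower_part Hr r"
  using assms(2,3) by (induction I rule: finite_induct) (auto simp: lp_zero lp_add[OF sg])

lemma lp_mono: "r \<le> s \<Longrightarrow> lower_part Hr r \<subseteq> lower_part Hr s"
  unfolding lower_part_def by force

lemma lp_neg:
  assumes sg: "\<forall>i. additive_subgroup (Hr i)" and "x \<in> lower_part Hr r"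
  shows "- x \<in> lower_part Hr r"
  using assms(2)
proof (induction rule: lp_induct)
  case 1 then show ?case by (simp add: lp_zero)
next
  case (2 i y z)
  have "- y \<in> Hr i" using sg 2 unfolding additive_subgroup_def by blast
  then have "- y + - z \<in> lower_part Hr r" using lp_cons[OF sg] 2 by blast
  then show ?case by (simp add: add.commute)
qed

lemma lp_split:
  assumes sg: "\<forall>i. additive_subgroup (Hr i)" and "l \<in> lower_part Hr (s + 1)"
  shows "\<exists>l' h. l' \<in> lower_part Hr s \<and> h \<in> Hr s \<and> l = l' + h"
  using assms(2)
proof (induction rule: lp_induct)
  case 1 then show ?case using sg lp_zero unfolding additive_subgroup_def by fastforce
next
  case (2 i y z)
  then obtain l' h where lh: "l' \<in> lower_part Hr s" "h \<in> Hr s" "z = l' + h" by blast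
  show ?case
  proof (cases "i = s")
    case True
    have "y + h \<in> Hr s" using sg True 2 lh unfolding additive_subgroup_def by blast
    then show ?thesis using lh by (intro exI[of _ l'] exI[of _ "y + h"]) (simp add: algebra_simps)
  next
    case False
    then have "i < s" using 2(1) by simp
    then have "y + l' \<in> lower_part Hr s" using 2(2) lh(1) lp_cons[OF sg, of i s y l'] by simp
    then show ?thesis using lh by (intro exI[of _ "y + l'"] exI[of _ h]) (simp add: algebra_simps)
  qed
qed

lemma decomp_fun:
  assumes "finite I" "\<forall>i\<in>I. f i \<in> A i" "\<forall>i. 0 \<in> A i"
  defines "F \<equiv> (\<lambda>i. if i \<in> I then f i else 0)"
  shows "finite {i. F i \<noteq> 0} \<and> (\<forall>i. F i \<in> A i) \<and> (\<Sum>i\<in>I. f i) = (\<Sum>i\<in>{i. F i \<noteq> 0}. F i)"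
proof -
  have sub: "{i. F i \<noteq> 0} \<subseteq> I" unfolding F_def by auto
  have "(\<Sum>i\<in>I. f i) = (\<Sum>i\<in>I. F i)" unfolding F_def by (rule sum.cong) auto
  also have "\<dots> = (\<Sum>i\<in>{i. F i \<noteq> 0}. F i)"
    by (rule sum.mono_neutral_right) (use assms(1) sub in auto)
  finally show ?thesis using finite_subset[OF sub assms(1)] assms(2,3) unfolding F_def by auto
qed

lemma decomp_uniq:
  assumes D: "direct_sum_decomp A" and z: "\<forall>i. 0 \<in> A i"
    and "finite I" "\<forall>i\<in>I. f i \<in> A i" "finite J" "\<forall>j\<in>J. g j \<in> A j"
    and eq: "(\<Sum>i\<in>I. f i) = (\<Sum>j\<in>J. g j)" and i: "i \<in> I" "i \<notin> J"
  shows "f i = 0"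
proof -
  define x where "x = (\<Sum>i\<in>I. f i)"
  have 1: "finite {i. (\<lambda>i. if i \<in> I then f i else 0) i \<noteq> 0} \<and> (\<forall>i. (\<lambda>i. if i \<in> I then f i else 0) i \<in> A i) \<and> x = (\<Sum>i\<in>{i. (\<lambda>i. if i \<in> I then f i else 0) i \<noteq> 0}. (\<lambda>i. if i \<in> I then f i else 0) i)"
    using decomp_fun[OF assms(3,4) z] unfolding x_def by blast
  have 2: "finite {i. (\<lambda>i. if i \<in> J then g i else 0) i \<noteq> 0} \<and> (\<forall>i. (\<lambda>i. if i \<in> J then g i else 0) i \<in> A i) \<and> x = (\<Sum>i\<in>{i. (\<lambda>i. if i \<in> J then g i else 0) i \<noteq> 0}. (\<lambda>i. if i \<in> J then g i else 0) i)"
    using decomp_fun[OF assms(5,6) z] eq unfolding x_def by simp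
  define Q where "Q F \<longleftrightarrow> finite {i. F i \<noteq> 0} \<and> (\<forall>i. F i \<in> A i) \<and> x = (\<Sum>i\<in>{i. F i \<noteq> 0}. F i)" for F
  from D have "\<exists>!F. Q F"
    unfolding direct_sum_decomp_def Q_def by blast
  then obtain F0 where F0: "\<forall>G. Q G \<longrightarrow> G = F0" by blast
  have q1: "Q (\<lambda>i. if i \<in> I then f i else 0)" unfolding Q_def using 1 by blast
  have q2: "Q (\<lambda>i. if i \<in> J then g i else 0)" unfolding Q_def using 2 by blast
  have "(\<lambda>i. if i \<in> I then f i else 0) = (\<lambda>i. if i \<in> J then g i else 0)"
    using F0[rule_format, OF q1] F0[rule_format, OF q2] by (rule trans[OF _ sym])
  then show ?thesis using i by (metis (full_types))
qed

lemma decomp_ex: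
  assumes "direct_sum_decomp A"
  shows "\<exists>I f. finite I \<and> (\<forall>i\<in>I. f i \<in> A i) \<and> x = (\<Sum>i\<in>I. f i)"
proof -
  from assms have "\<exists>!f. finite {i. f i \<noteq> 0} \<and> (\<forall>i. f i \<in> A i) \<and> x = (\<Sum>i\<in>{i. f i \<noteq> 0}. f i)"
    unfolding direct_sum_decomp_def by (rule spec)
  then obtain f where "finite {i. f i \<noteq> 0}" "\<forall>i. f i \<in> A i" "x = (\<Sum>i\<in>{i. f i \<noteq> 0}. f i)"
    by (metis (no_types, lifting))
  then show ?thesis by blast
qed

lemma asg_0: "additive_subgroup A \<Longrightarrow> 0 \<in> A" unfolding additive_subgroup_def by blast
lemma asg_add: "additive_subgroup A \<Longrightarrow> x \<in> A \<Longrightarrow> y \<in> A \<Longrightarrow> x + y \<in> A" unfolding additive_subgroup_def by blast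
lemma asg_neg: "additive_subgroup A \<Longrightarrow> x \<in> A \<Longrightarrow> - x \<in> A" unfolding additive_subgroup_def by blast
lemma asg_diff: "additive_subgroup A \<Longrightarrow> x \<in> A \<Longrightarrow> y \<in> A \<Longrightarrow> x - y \<in> A"
  using asg_add[of A x "- y"] asg_neg[of A y] by simp
lemma submod_asg: "submod R act A \<Longrightarrow> additive_subgroup A" unfolding submod_def by blast
lemma submod_act: "submod R act A \<Longrightarrow> r \<in> R \<Longrightarrow> x \<in> A \<Longrightarrow> act r x \<in> A" unfolding submod_def by blast

lemma art_ext:
  assumes "artinian_quot R act P N" "artinian_quot R act M P" "submod R act P" "submod R act M"
    "N \<subseteq> P" "P \<subseteq> M" and lin: "\<And>r x y. act r (x + y) = act r x + act r y"
  shows "artinian_quot R act M N"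
  unfolding artinian_quot_def
proof (intro allI impI)
  fix C :: "nat \<Rightarrow> _" assume C: "\<forall>n. submod R act (C n) \<and> N \<subseteq> C n \<and> C n \<subseteq> M \<and> C (Suc n) \<subseteq> C n"
  have Cs: "submod R act (C n)" for n using C by blast
  have Ca: "additive_subgroup (C n)" for n using Cs submod_asg by blast
  have Pa: "additive_subgroup P" using assms(3) submod_asg by blast
  have Ma: "additive_subgroup M" using assms(4) submod_asg by blast
  define D where "D n = C n \<inter> P" for n
  define E where "E n = {c + p | c p. c \<in> C n \<and> p \<in> P}" for n
  have "\<forall>n. submod R act (D n) \<and> N \<subseteq> D n \<and> D n \<subseteq> P \<and> D (Suc n) \<subseteq> D n"
  proof
    fix n
    have "additive_subgroup (D n)" unfolding additive_subgroup_def D_def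
      using asg_0[OF Ca] asg_0[OF Pa] asg_add[OF Ca] asg_add[OF Pa] asg_neg[OF Ca] asg_neg[OF Pa] by blast
    moreover have "\<forall>r\<in>R. \<forall>x\<in>D n. act r x \<in> D n" unfolding D_def
      using submod_act[OF Cs] submod_act[OF assms(3)] by blast
    ultimately show "submod R act (D n) \<and> N \<subseteq> D n \<and> D n \<subseteq> P \<and> D (Suc n) \<subseteq> D n"
      unfolding submod_def D_def using C assms(5) by blast
  qed
  then obtain k1 where k1: "\<forall>n\<ge>k1. D n = D k1" using assms(1) unfolding artinian_quot_def by blast
  have "\<forall>n. submod R act (E n) \<and> P \<subseteq> E n \<and> E n \<subseteq> M \<and> E (Suc n) \<subseteq> E n"
  proof
    fix n
    have "additive_subgroup (E n)" unfolding additive_subgroup_def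
    proof (intro conjI ballI)
      show "0 \<in> E n" unfolding E_def using asg_0[OF Ca] asg_0[OF Pa]
        by (intro CollectI exI[of _ 0] exI[of _ 0]) simp
    next
      fix x y assume "x \<in> E n" "y \<in> E n"
      then obtain c p c' p' where "c \<in> C n" "p \<in> P" "x = c + p" "c' \<in> C n" "p' \<in> P" "y = c' + p'"
        unfolding E_def by blast
      then show "x + y \<in> E n" unfolding E_def using asg_add[OF Ca] asg_add[OF Pa]
        by (intro CollectI exI[of _ "c + c'"] exI[of _ "p + p'"]) (simp add: algebra_simps)
    next
      fix x assume "x \<in> E n"
      then obtain c p where "c \<in> C n" "p \<in> P" "x = c + p" unfolding E_def by blast
      then show "- x \<in> E n" unfolding E_def using asg_neg[OF Ca] asg_neg[OF Pa]
        by (intro CollectI exI[of _ "- c"] exI[of _ "- p"]) (simp add: algebra_simps)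
    qed
    moreover have "\<forall>r\<in>R. \<forall>x\<in>E n. act r x \<in> E n"
    proof (intro ballI)
      fix r x assume r: "r \<in> R" and "x \<in> E n"
      then obtain c p where "c \<in> C n" "p \<in> P" "x = c + p" unfolding E_def by blast
      then show "act r x \<in> E n" unfolding E_def using submod_act[OF Cs r] submod_act[OF assms(3) r]
        by (intro CollectI exI[of _ "act r c"] exI[of _ "act r p"]) (simp add: lin)
    qed
    moreover have "P \<subseteq> E n"
    proof
      fix p assume "p \<in> P" then show "p \<in> E n" unfolding E_def using asg_0[OF Ca]
        by (intro CollectI exI[of _ 0] exI[of _ p]) simp
    qed
    moreover have "E n \<subseteq> M"
    proof
      fix x assume "x \<in> E n"
      then obtain c p where "c \<in> C n" "p \<in> P" "x = c + p" unfolding E_def by blast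
      then show "x \<in> M" using C assms(6) asg_add[OF Ma] by blast
    qed
    moreover have "E (Suc n) \<subseteq> E n" unfolding E_def using C by blast
    ultimately show "submod R act (E n) \<and> P \<subseteq> E n \<and> E n \<subseteq> M \<and> E (Suc n) \<subseteq> E n"
      unfolding submod_def by blast
  qed
  then obtain k2 where k2: "\<forall>n\<ge>k2. E n = E k2" using assms(2) unfolding artinian_quot_def by blast
  have anti: "C n \<subseteq> C m" if "m \<le> n" for m n
    using that by (induction rule: dec_induct) (use C in blast)+
  show "\<exists>k. \<forall>n\<ge>k. C n = C k"
  proof (intro exI allI impI)
    fix n assume n: "n \<ge> max k1 k2"
    define K where "K = max k1 k2"
    have nK: "K \<le> n" "k1 \<le> K" "k2 \<le> K" using n unfolding K_def by auto
    show "C n = C (max k1 k2)" unfolding K_def[symmetric]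
    proof
      show "C n \<subseteq> C K" using anti nK by blast
      show "C K \<subseteq> C n"
      proof
        fix x assume x: "x \<in> C K"
        have "x \<in> E K" unfolding E_def using asg_0[OF Pa] x
          by (intro CollectI exI[of _ x] exI[of _ 0]) simp
        moreover have "E K = E n" using k2 nK by (metis order_trans)
        ultimately obtain c p where cp: "c \<in> C n" "p \<in> P" "x = c + p" unfolding E_def by blast
        have "c \<in> C K" using anti nK cp by blast
        then have "x - c \<in> C K" using asg_diff[OF Ca] x by blast
        then have "p \<in> C K" using cp by simp
        then have "p \<in> D K" using cp unfolding D_def by blast
        moreover have "D K = D n" using k1 nK by (metis order_trans)
        ultimately have "p \<in> C n" unfolding D_def by blast
        then show "x \<in> C n" using cp asg_add[OF Ca] by blast
      qed
    qed
  qed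
qed

lemma double_stab:
  fixes F :: "nat \<Rightarrow> nat \<Rightarrow> 'a set"
  assumes a1: "\<And>n k. F (Suc n) k \<subseteq> F n k" and a2: "\<And>n k. F n (Suc k) \<subseteq> F n k"
    and col: "\<And>k. \<exists>m. \<forall>n\<ge>m. F n k = F m k" and diag: "\<exists>m. \<forall>n\<ge>m. F n n = F m m"
  shows "\<exists>n0. \<forall>n\<ge>n0. \<forall>k. F n k = F n0 k"
proof -
  have mono: "F n' k' \<subseteq> F n k" if "n \<le> n'" "k \<le> k'" for n n' k k'
  proof -
    have "F n' k' \<subseteq> F n k'" using that(1) by (induction rule: dec_induct) (use a1 in blast)+
    moreover have "F n k' \<subseteq> F n k" using that(2) by (induction rule: dec_induct) (use a2 in blast)+
    ultimately show ?thesis by blast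
  qed
  obtain n2 where n2: "\<forall>n\<ge>n2. F n n = F n2 n2" using diag by blast
  obtain m where m: "\<And>k. \<forall>n\<ge>m k. F n k = F (m k) k" using col by metis
  define n0 where "n0 = max n2 (Max (insert 0 (m ` {..<n2})))"
  have big: "F n k = F n2 n2" if "n \<ge> n2" "k \<ge> n2" for n k
  proof (cases "k \<ge> n")
    case True
    have "F n k \<subseteq> F n n" using mono True by simp
    moreover have "F k k \<subseteq> F n k" using mono True by simp
    ultimately show ?thesis using n2 that True by (metis order.trans antisym order_refl)
  next
    case False
    have "F n k \<subseteq> F k k" using mono False by simp
    moreover have "F n n \<subseteq> F n k" using mono False by simp
    ultimately show ?thesis using n2 that False by (metis antisym)
  qed
  show ?thesis
  proof (intro exI allI impI)
    fix n k assume n: "n \<ge> n0"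
    show "F n k = F n0 k"
    proof (cases "k < n2")
      case True
      have "m k \<le> Max (insert 0 (m ` {..<n2}))" using True by (intro Max_ge) auto
      then have h1: "m k \<le> n0" unfolding n0_def by linarith
      then have h2: "m k \<le> n" using n by linarith
      have "F n k = F (m k) k" using m[of k] h2 by blast
      moreover have "F n0 k = F (m k) k" using m[of k] h1 by blast
      ultimately show ?thesis by simp
    next
      case False
      have "n2 \<le> n0" unfolding n0_def by simp
      then have "F n0 k = F n2 n2" using False by (intro big) simp_all
      moreover have "F n k = F n2 n2" using False n \<open>n2 \<le> n0\<close> by (intro big) simp_all
      ultimately show ?thesis by simp
    qed
  qed
qed



locale ctx =
  fixes Gr :: "int \<Rightarrow> 'g::comm_ring_1 set"
    and sc :: "'g \<Rightarrow> 'h::ab_group_add \<Rightarrow> 'h"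
    and Hr :: "int \<Rightarrow> 'h set"
    and X :: "'h \<Rightarrow> 'h" and d :: int
  assumes G: "graded_ring Gr"
    and G_pos: "\<forall>i>0. Gr i = {0}"
    and H: "graded_module Gr sc Hr"
    and X_lin: "module_hom sc sc X"
    and d_neg: "d < 0"
    and X_deg: "\<forall>i. \<forall>x\<in>Hr i. X x \<in> Hr (i + d)"
begin

lemma sg: "\<forall>i. additive_subgroup (Hr i)" using H unfolding graded_module_def by blast
lemma msc: "module sc" using H unfolding graded_module_def by blast
lemma Hsc: "a \<in> Gr i \<Longrightarrow> x \<in> Hr j \<Longrightarrow> sc a x \<in> Hr (i + j)" using H unfolding graded_module_def by blast
lemma Hdec: "direct_sum_decomp Hr" using H unfolding graded_module_def by blast
lemma Gdec: "direct_sum_decomp Gr" using G unfolding graded_ring_def by blast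
lemma z0: "\<forall>i. 0 \<in> Hr i" using sg unfolding additive_subgroup_def by blast

lemma Xadd: "X (a + b) = X a + X b" using module_hom.add[OF X_lin] .
lemma Xsc: "X (sc r b) = sc r (X b)" using module_hom.scale[OF X_lin] .
lemma Xzero[simp]: "X 0 = 0" using module_hom.zero[OF X_lin] .
lemma Xneg: "X (- a) = - X a" using module_hom.neg[OF X_lin] .
lemma Xdiff: "X (a - b) = X a - X b" by (metis Xadd Xneg diff_conv_add_uminus)
lemma Xsum: "X (sum f I) = (\<Sum>i\<in>I. X (f i))"
  by (induction I rule: infinite_finite_induct) (auto simp: Xadd)

lemma Xk_add: "(X ^^ k) (a + b) = (X ^^ k) a + (X ^^ k) b" by (induction k) (auto simp: Xadd)
lemma Xk_zero[simp]: "(X ^^ k) 0 = 0" by (induction k) auto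
lemma Xk_neg: "(X ^^ k) (- a) = - (X ^^ k) a" by (induction k) (auto simp: Xneg)
lemma Xk_diff: "(X ^^ k) (a - b) = (X ^^ k) a - (X ^^ k) b" by (metis Xk_add Xk_neg diff_conv_add_uminus)
lemma Xk_sc: "(X ^^ k) (sc r a) = sc r ((X ^^ k) a)" by (induction k) (auto simp: Xsc)
lemma Xk_deg: "y \<in> Hr i \<Longrightarrow> (X ^^ k) y \<in> Hr (i + int k * d)"
proof (induction k)
  case 0 then show ?case by simp
next
  case (Suc k)
  then have "X ((X ^^ k) y) \<in> Hr (i + int k * d + d)" using X_deg by blast
  then show ?case by (simp add: algebra_simps)
qed

lemma sc_zero_right[simp]: "sc a 0 = 0" using module.scale_zero_right[OF msc] .
lemma sc_zero_left[simp]: "sc 0 x = 0" using module.scale_zero_left[OF msc] .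
lemma sc_add: "sc a (x + y) = sc a x + sc a y" using module.scale_right_distrib[OF msc] .
lemma sc_one[simp]: "sc 1 x = x" using module.scale_one[OF msc] .

lemma lp_sc_hom:
  assumes "i < r" "y \<in> Hr i" shows "sc a y \<in> lower_part Hr r"
proof -
  obtain J g where Jg: "finite J" "\<forall>j\<in>J. g j \<in> Gr j" "a = (\<Sum>j\<in>J. g j)" using decomp_ex[OF Gdec] by blast
  have eq: "sc a y = (\<Sum>j\<in>J. sc (g j) y)" using Jg(3) module.scale_sum_left[OF msc] by simp
  have mem: "(\<Sum>j\<in>J. sc (g j) y) \<in> lower_part Hr r"
  proof (rule lp_sum[OF sg Jg(1)])
    fix j assume j: "j \<in> J"
    show "sc (g j) y \<in> lower_part Hr r"
    proof (cases "j > 0")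
      case True
      then have "g j = 0" using G_pos Jg(2) j by blast
      then show ?thesis by (simp add: lp_zero)
    next
      case False
      have mm: "sc (g j) y \<in> Hr (j + i)" using Hsc Jg(2) j assms(2) by blast
      show ?thesis by (rule lp_hom[OF sg _ mm]) (use False assms(1) in simp)
    qed
  qed
  show ?thesis using eq mem by simp
qed

lemma lp_sc: "x \<in> lower_part Hr r \<Longrightarrow> sc a x \<in> lower_part Hr r"
proof (induction rule: lp_induct)
  case 1 then show ?case by (simp add: lp_zero)
next
  case (2 i y z)
  have "sc a y \<in> lower_part Hr r" using lp_sc_hom 2 by blast
  then show ?case using 2(3) by (simp add: sc_add lp_add[OF sg])
qed

lemma lp_X: "x \<in> lower_part Hr r \<Longrightarrow> X x \<in> lower_part Hr r"
proof (induction rule: lp_induct)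
  case 1 then show ?case by (simp add: lp_zero)
next
  case (2 i y z)
  have mm: "X y \<in> Hr (i + d)" using X_deg 2 by blast
  have "X y \<in> lower_part Hr r" by (rule lp_hom[OF sg _ mm]) (use 2(1) d_neg in simp)
  then show ?case using 2 by (simp add: Xadd lp_add[OF sg])
qed

lemma lp_Xk: "x \<in> lower_part Hr r \<Longrightarrow> (X ^^ k) x \<in> lower_part Hr r"
  by (induction k) (auto simp: lp_X)

lemma lp_submod: "submod UNIV sc (lower_part Hr r)"
  unfolding submod_def additive_subgroup_def
  by (auto simp: lp_zero lp_add[OF sg] lp_neg[OF sg] lp_sc)

lemma nilp_hom: "y \<in> Hr i \<Longrightarrow> \<exists>k. (X ^^ k) y \<in> lower_part Hr r"
proof -
  assume y: "y \<in> Hr i"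
  define k where "k = nat (i - r + 1)"
  have "(X ^^ k) y \<in> Hr (i + int k * d)" using Xk_deg y .
  moreover have "i + int k * d < r"
  proof -
    have "int k * d \<le> - int k" using mult_left_mono[of d "-1" "int k"] d_neg by simp
    then show ?thesis unfolding k_def by linarith
  qed
  ultimately show ?thesis using lp_hom[OF sg] by blast
qed

lemma nilp_mono: "(X ^^ k) x \<in> lower_part Hr r \<Longrightarrow> k \<le> k' \<Longrightarrow> (X ^^ k') x \<in> lower_part Hr r"
proof -
  assume a: "(X ^^ k) x \<in> lower_part Hr r" "k \<le> k'"
  have "(X ^^ k') x = (X ^^ (k' - k)) ((X ^^ k) x)" using a(2) by (metis funpow_add le_add_diff_inverse2 comp_apply)
  then show ?thesis using lp_Xk a(1) by simp
qed

lemma nilp: "\<exists>k. (X ^^ k) x \<in> lower_part Hr r"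
proof -
  obtain I f where If: "finite I" "\<forall>i\<in>I. f i \<in> Hr i" "x = (\<Sum>i\<in>I. f i)" using decomp_ex[OF Hdec] by blast
  have "(\<forall>i\<in>I. f i \<in> Hr i) \<longrightarrow> (\<exists>k. (X ^^ k) (\<Sum>i\<in>I. f i) \<in> lower_part Hr r)" using If(1)
  proof (induction I rule: finite_induct)
    case empty then show ?case by (auto simp: lp_zero)
  next
    case (insert a F)
    show ?case
    proof
      assume h: "\<forall>i\<in>insert a F. f i \<in> Hr i"
      obtain k1 where k1: "(X ^^ k1) (\<Sum>i\<in>F. f i) \<in> lower_part Hr r" using insert h by blast
      obtain k2 where k2: "(X ^^ k2) (f a) \<in> lower_part Hr r" using nilp_hom h by blast
      have "(X ^^ max k1 k2) (\<Sum>i\<in>insert a F. f i) \<in> lower_part Hr r"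
        using insert(1,2) nilp_mono[OF k1] nilp_mono[OF k2]
        by (simp add: Xk_add lp_add[OF sg])
      then show "\<exists>k. (X ^^ k) (\<Sum>i\<in>insert a F. f i) \<in> lower_part Hr r" by blast
    qed
  qed
  then show ?thesis using If by blast
qed

definition P :: "int \<Rightarrow> nat \<Rightarrow> 'h set" where
  "P r m = {q + l | q l. X q = 0 \<and> l \<in> lower_part Hr (r + int m)}"

lemma P_submod: "submod UNIV sc (P r m)"
  unfolding submod_def additive_subgroup_def P_def
proof (intro conjI ballI)
  show "0 \<in> {q + l |q l. X q = 0 \<and> l \<in> lower_part Hr (r + int m)}"
    using lp_zero by force
next
  fix x y assume "x \<in> {q + l |q l. X q = 0 \<and> l \<in> lower_part Hr (r + int m)}"
    "y \<in> {q + l |q l. X q = 0 \<and> l \<in> lower_part Hr (r + int m)}"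
  then obtain q l q' l' where "X q = 0" "l \<in> lower_part Hr (r + int m)" "x = q + l"
    "X q' = 0" "l' \<in> lower_part Hr (r + int m)" "y = q' + l'" by blast
  then show "x + y \<in> {q + l |q l. X q = 0 \<and> l \<in> lower_part Hr (r + int m)}"
    by (intro CollectI exI[of _ "q + q'"] exI[of _ "l + l'"]) (simp add: Xadd lp_add[OF sg] algebra_simps)
next
  fix x assume "x \<in> {q + l |q l. X q = 0 \<and> l \<in> lower_part Hr (r + int m)}"
  then obtain q l where "X q = 0" "l \<in> lower_part Hr (r + int m)" "x = q + l" by blast
  then show "- x \<in> {q + l |q l. X q = 0 \<and> l \<in> lower_part Hr (r + int m)}"
    by (intro CollectI exI[of _ "- q"] exI[of _ "- l"]) (simp add: Xneg lp_neg[OF sg] algebra_simps)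
next
  fix a x assume "x \<in> {q + l |q l. X q = 0 \<and> l \<in> lower_part Hr (r + int m)}"
  then obtain q l where "X q = 0" "l \<in> lower_part Hr (r + int m)" "x = q + l" by blast
  then show "sc a x \<in> {q + l |q l. X q = 0 \<and> l \<in> lower_part Hr (r + int m)}"
    by (intro CollectI exI[of _ "sc a q"] exI[of _ "sc a l"]) (simp add: Xsc lp_sc sc_add)
qed

lemma lp_P: "lower_part Hr r \<subseteq> P r m"
  unfolding P_def using lp_mono[of r "r + int m" Hr] by force

lemma P_mono: "P r m \<subseteq> P r (Suc m)"
  unfolding P_def using lp_mono[of "r + int m" "r + int (Suc m)" Hr] by force

lemma kerS: assumes "X x \<in> lower_part Hr r" shows "x \<in> P r (nat (- d))"
proof -
  obtain I f where If: "finite I" "\<forall>i\<in>I. f i \<in> Hr i" "x = (\<Sum>i\<in>I. f i)" using decomp_ex[OF Hdec] by blast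
  define J where "J = (\<lambda>i. i + d) ` I"
  define g where "g j = X (f (j - d))" for j
  have inj: "inj_on (\<lambda>i. i + d) I" by (rule inj_onI) simp
  have "(\<Sum>j\<in>J. g j) = (\<Sum>i\<in>I. g (i + d))" unfolding J_def using sum.reindex[OF inj] by simp
  also have "\<dots> = X x" unfolding g_def If(3) Xsum by simp
  finally have eqJ: "(\<Sum>j\<in>J. g j) = X x" .
  have gJ: "\<forall>j\<in>J. g j \<in> Hr j" unfolding J_def g_def using If(2) X_deg by auto
  obtain K h where Kh: "finite K" "\<forall>k\<in>K. k < r \<and> h k \<in> Hr k" "X x = (\<Sum>k\<in>K. h k)"
    using assms unfolding lower_part_def by blast
  have zero: "X (f i) = 0" if "i \<in> I" "i + d \<ge> r" for i
  proof -
    have "i + d \<in> J" using that unfolding J_def by blast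
    moreover have "i + d \<notin> K" using Kh(2) that by force
    ultimately have "g (i + d) = 0"
      using decomp_uniq[OF Hdec z0, of J g K h] gJ Kh eqJ J_def If(1) by auto
    then show ?thesis unfolding g_def by simp
  qed
  define A where "A = {i. i < r - d}"
  have "x = (\<Sum>i\<in>I \<inter> A. f i) + (\<Sum>i\<in>I - A. f i)" using If(3) If(1) by (simp add: sum.Int_Diff)
  moreover have "(\<Sum>i\<in>I \<inter> A. f i) \<in> lower_part Hr (r + int (nat (- d)))"
    using If(1,2) d_neg by (intro lp_sum[OF sg]) (auto simp: A_def intro!: lp_hom[OF sg])
  moreover have "X (\<Sum>i\<in>I - A. f i) = 0" unfolding Xsum using zero by (auto simp: A_def)
  ultimately show ?thesis unfolding P_def by (intro CollectI exI[of _ "(\<Sum>i\<in>I - A. f i)"] exI[of _ "(\<Sum>i\<in>I \<inter> A. f i)"]) (simp add: add.commute)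
qed

end


context ctx begin

lemma ker_submod: "submod UNIV sc {x. X x = 0}"
  unfolding submod_def additive_subgroup_def by (auto simp: Xadd Xneg Xsc)

lemma Hr_add: "x \<in> Hr i \<Longrightarrow> y \<in> Hr i \<Longrightarrow> x + y \<in> Hr i" using sg unfolding additive_subgroup_def by blast

lemma art_P0:
  assumes kr: "artinian_quot UNIV sc {x. X x = 0} (lower_part (\<lambda>i. Hr i \<inter> {x. X x = 0}) r0)" and r0: "r0 \<le> r"
  shows "artinian_quot UNIV sc (P r 0) (lower_part Hr r)"
  unfolding artinian_quot_def
proof (intro allI impI)
  fix C :: "nat \<Rightarrow> 'h set"
  assume C: "\<forall>n. submod UNIV sc (C n) \<and> lower_part Hr r \<subseteq> C n \<and> C n \<subseteq> P r 0 \<and> C (Suc n) \<subseteq> C n"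
  define D where "D n = C n \<inter> {x. X x = 0}" for n
  have lpk: "lower_part (\<lambda>i. Hr i \<inter> {x. X x = 0}) r0 \<subseteq> lower_part Hr r \<inter> {x. X x = 0}"
  proof
    fix x assume "x \<in> lower_part (\<lambda>i. Hr i \<inter> {x. X x = 0}) r0"
    then show "x \<in> lower_part Hr r \<inter> {x. X x = 0}"
    proof (induction rule: lp_induct)
      case 1 then show ?case by (simp add: lp_zero)
    next
      case (2 i y z)
      have "y + z \<in> lower_part Hr r" using 2 r0 by (intro lp_cons[OF sg, of i]) auto
      then show ?case using 2 by (simp add: Xadd)
    qed
  qed
  have "\<forall>n. submod UNIV sc (D n) \<and> lower_part (\<lambda>i. Hr i \<inter> {x. X x = 0}) r0 \<subseteq> D n \<and> D n \<subseteq> {x. X x = 0} \<and> D (Suc n) \<subseteq> D n"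
    using C ker_submod lpk unfolding D_def submod_def additive_subgroup_def by blast
  then obtain k where k: "\<forall>n\<ge>k. D n = D k" using kr unfolding artinian_quot_def by blast
  have anti: "C n \<subseteq> C m" if "m \<le> n" for m n
    using that by (induction rule: dec_induct) (use C in blast)+
  show "\<exists>k. \<forall>n\<ge>k. C n = C k"
  proof (intro exI allI impI)
    fix n assume n: "n \<ge> k"
    show "C n = C k"
    proof
      show "C n \<subseteq> C k" using anti n by blast
      show "C k \<subseteq> C n"
      proof
        fix x assume x: "x \<in> C k"
        then have "x \<in> P r 0" using C by blast
        then obtain q l where ql: "X q = 0" "l \<in> lower_part Hr r" "x = q + l" unfolding P_def by auto
        have lC: "l \<in> C n" "l \<in> C k" using C ql by blast+
        have "q \<in> C k" using x lC(2) C ql(3) unfolding submod_def additive_subgroup_def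
          by (metis add_diff_cancel_right' diff_conv_add_uminus)
        then have "q \<in> D k" using ql unfolding D_def by blast
        moreover have "D n = D k" using k n by blast
        ultimately have "q \<in> D n" by simp
        then show "x \<in> C n" using lC ql C unfolding D_def submod_def additive_subgroup_def by blast
      qed
    qed
  qed
qed

lemma art_step:
  assumes Nr: "\<forall>i\<ge>r. artinian_quot (Gr 0) sc (Hr i) {0}"
  shows "artinian_quot UNIV sc (P r (Suc m)) (P r m)"
  unfolding artinian_quot_def
proof (intro allI impI)
  fix C :: "nat \<Rightarrow> 'h set"
  assume C: "\<forall>n. submod UNIV sc (C n) \<and> P r m \<subseteq> C n \<and> C n \<subseteq> P r (Suc m) \<and> C (Suc n) \<subseteq> C n"
  define D where "D n = C n \<inter> Hr (r + int m)" for n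
  have "\<forall>n. submod (Gr 0) sc (D n) \<and> {0} \<subseteq> D n \<and> D n \<subseteq> Hr (r + int m) \<and> D (Suc n) \<subseteq> D n"
  proof
    fix n
    have "sc a x \<in> Hr (r + int m)" if "a \<in> Gr 0" "x \<in> Hr (r + int m)" for a x
      using Hsc[OF that] by simp
    moreover have "additive_subgroup (Hr (r + int m))" using sg by blast
    ultimately show "submod (Gr 0) sc (D n) \<and> {0} \<subseteq> D n \<and> D n \<subseteq> Hr (r + int m) \<and> D (Suc n) \<subseteq> D n"
      using C unfolding D_def submod_def additive_subgroup_def by blast
  qed
  moreover have "artinian_quot (Gr 0) sc (Hr (r + int m)) {0}" using Nr by simp
  ultimately obtain k where k: "\<forall>n\<ge>k. D n = D k" unfolding artinian_quot_def by blast
  have anti: "C n \<subseteq> C m" if "m \<le> n" for m n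
    using that by (induction rule: dec_induct) (use C in blast)+
  show "\<exists>k. \<forall>n\<ge>k. C n = C k"
  proof (intro exI allI impI)
    fix n assume n: "n \<ge> k"
    show "C n = C k"
    proof
      show "C n \<subseteq> C k" using anti n by blast
      show "C k \<subseteq> C n"
      proof
        fix x assume x: "x \<in> C k"
        then have "x \<in> P r (Suc m)" using C by blast
        then obtain q l where ql0: "X q = 0" "l \<in> lower_part Hr (r + int (Suc m))" "x = q + l"
          unfolding P_def by blast
        have e: "r + int (Suc m) = (r + int m) + 1" by simp
        have ql: "X q = 0" "l \<in> lower_part Hr ((r + int m) + 1)" "x = q + l"
          using ql0 unfolding e by simp_all
        obtain l' h where lh: "l' \<in> lower_part Hr (r + int m)" "h \<in> Hr (r + int m)" "l = l' + h"
          using lp_split[OF sg ql(2)] by blast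
        have "q + l' \<in> P r m" unfolding P_def using ql(1) lh(1) by blast
        then have qC: "q + l' \<in> C n" "q + l' \<in> C k" using C by blast+
        have "h = x - (q + l')" using ql(3) lh(3) by (simp add: algebra_simps)
        then have "h \<in> C k" using x qC(2) C unfolding submod_def additive_subgroup_def
          by (metis diff_conv_add_uminus)
        then have "h \<in> D k" using lh unfolding D_def by blast
        moreover have "D n = D k" using k n by blast
        ultimately have "h \<in> D n" by simp
        then have "h \<in> C n" unfolding D_def by blast
        then have "(q + l') + h \<in> C n" using qC(1) C unfolding submod_def additive_subgroup_def by blast
        then show "x \<in> C n" using ql(3) lh(3) by (simp add: add.assoc)
      qed
    qed
  qed
qed

lemma art_P:
  assumes kr: "artinian_quot UNIV sc {x. X x = 0} (lower_part (\<lambda>i. Hr i \<inter> {x. X x = 0}) r0)" and r0: "r0 \<le> r"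
    and Nr: "\<forall>i\<ge>r. artinian_quot (Gr 0) sc (Hr i) {0}"
  shows "artinian_quot UNIV sc (P r m) (lower_part Hr r)"
proof (induction m)
  case 0 then show ?case using art_P0[OF kr r0] .
next
  case (Suc m)
  show ?case
    by (rule art_ext[OF Suc art_step[OF Nr] P_submod P_submod lp_P P_mono]) (simp add: sc_add)
qed

end



lemma poly_act_const: "module sc \<Longrightarrow> poly_act sc X [:a:] x = sc a x"
  unfolding poly_act_def by simp

lemma poly_act_X: "module sc \<Longrightarrow> poly_act sc X [:0, 1:] x = X x"
  unfolding poly_act_def by (simp add: module.scale_zero_left module.scale_one)

context ctx begin

lemma main_art:
  assumes S_art: "artinian_quot UNIV sc (P r (nat (- d))) (lower_part Hr r)"
  shows "artinian_quot UNIV (poly_act sc X) UNIV (lower_part Hr r)"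
  unfolding artinian_quot_def
proof (intro allI impI)
  fix C :: "nat \<Rightarrow> 'h set"
  assume C: "\<forall>n. submod UNIV (poly_act sc X) (C n) \<and> lower_part Hr r \<subseteq> C n \<and> C n \<subseteq> UNIV \<and> C (Suc n) \<subseteq> C n"
  define S where "S = P r (nat (- d))"
  define L where "L = lower_part Hr r"
  have Ca: "additive_subgroup (C n)" for n using C unfolding submod_def by blast
  have Cp: "poly_act sc X p x \<in> C n" if "x \<in> C n" for p x n using C that unfolding submod_def by blast
  have Csc: "sc a x \<in> C n" if "x \<in> C n" for a x n using Cp[OF that, of "[:a:]"] poly_act_const[OF msc] by simp
  have CX: "X x \<in> C n" if "x \<in> C n" for x n using Cp[OF that, of "[:0, 1:]"] poly_act_X[OF msc] by simp
  have CXk: "(X ^^ k) x \<in> C n" if "x \<in> C n" for x n k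
    using that by (induction k) (auto intro: CX)
  have LC: "L \<subseteq> C n" for n using C unfolding L_def by blast
  have anti: "C n \<subseteq> C m" if "m \<le> n" for m n
    using that by (induction rule: dec_induct) (use C in blast)+
  have La: "additive_subgroup L" using lp_submod unfolding L_def submod_def by blast
  have LS: "L \<subseteq> S" unfolding L_def S_def by (rule lp_P)
  have Ss: "submod UNIV sc S" unfolding S_def by (rule P_submod)
  define F where "F n k = S \<inter> {(X ^^ k) c + l | c l. c \<in> C n \<and> l \<in> L}" for n k
  have Fprop: "submod UNIV sc (F n k) \<and> L \<subseteq> F n k \<and> F n k \<subseteq> S" for n k
  proof -
    define T where "T = {(X ^^ k) c + l | c l. c \<in> C n \<and> l \<in> L}"
    have Ta: "additive_subgroup T" unfolding additive_subgroup_def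
    proof (intro conjI ballI)
      show "0 \<in> T" unfolding T_def using asg_0[OF Ca] asg_0[OF La]
        by (intro CollectI exI[of _ 0] exI[of _ 0]) simp
    next
      fix x y assume "x \<in> T" "y \<in> T"
      then obtain c p c' p' where "c \<in> C n" "p \<in> L" "x = (X ^^ k) c + p" "c' \<in> C n" "p' \<in> L" "y = (X ^^ k) c' + p'"
        unfolding T_def by blast
      then show "x + y \<in> T" unfolding T_def using asg_add[OF Ca] asg_add[OF La]
        by (intro CollectI exI[of _ "c + c'"] exI[of _ "p + p'"]) (simp add: algebra_simps Xk_add)
    next
      fix x assume "x \<in> T"
      then obtain c p where "c \<in> C n" "p \<in> L" "x = (X ^^ k) c + p" unfolding T_def by blast
      then show "- x \<in> T" unfolding T_def using asg_neg[OF Ca] asg_neg[OF La]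
        by (intro CollectI exI[of _ "- c"] exI[of _ "- p"]) (simp add: algebra_simps Xk_neg)
    qed
    have Tsc: "\<forall>a\<in>UNIV. \<forall>x\<in>T. sc a x \<in> T"
    proof (intro ballI)
      fix a x assume "x \<in> T"
      then obtain c p where "c \<in> C n" "p \<in> L" "x = (X ^^ k) c + p" unfolding T_def by blast
      then show "sc a x \<in> T" unfolding T_def using Csc lp_sc unfolding L_def
        by (intro CollectI exI[of _ "sc a c"] exI[of _ "sc a p"]) (simp add: Xk_sc sc_add)
    qed
    have LT: "L \<subseteq> T"
    proof
      fix l assume "l \<in> L" then show "l \<in> T" unfolding T_def using asg_0[OF Ca]
        by (intro CollectI exI[of _ 0] exI[of _ l]) simp
    qed
    have "submod UNIV sc (S \<inter> T)" using Ss Ta Tsc unfolding submod_def additive_subgroup_def by blast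
    then show ?thesis unfolding F_def T_def[symmetric] using LS LT by blast
  qed
  have F1: "F (Suc n) k \<subseteq> F n k" for n k unfolding F_def using C by blast
  have F2: "F n (Suc k) \<subseteq> F n k" for n k
  proof
    fix x assume "x \<in> F n (Suc k)"
    then obtain c l where cl: "x \<in> S" "c \<in> C n" "l \<in> L" "x = (X ^^ Suc k) c + l" unfolding F_def by blast
    have e: "(X ^^ Suc k) c = (X ^^ k) (X c)" by (simp only: funpow_Suc_right comp_apply)
    have "x \<in> {(X ^^ k) c + l | c l. c \<in> C n \<and> l \<in> L}"
      by (rule CollectI, rule exI[of _ "X c"], rule exI[of _ l]) (use cl e CX[OF cl(2)] in simp)
    then show "x \<in> F n k" unfolding F_def using cl(1) by blast
  qed
  have col: "\<exists>m. \<forall>n\<ge>m. F n k = F m k" for k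
    using S_art Fprop F1 unfolding artinian_quot_def S_def[symmetric] L_def[symmetric]
    by (elim allE[of _ "\<lambda>n. F n k"]) blast
  have diag: "\<exists>m. \<forall>n\<ge>m. F n n = F m m"
  proof -
    have "F (Suc n) (Suc n) \<subseteq> F n n" for n using F1 F2 by blast
    then show ?thesis
      using S_art Fprop unfolding artinian_quot_def S_def[symmetric] L_def[symmetric]
      by (elim allE[of _ "\<lambda>n. F n n"]) blast
  qed
  obtain n0 where n0: "\<forall>n\<ge>n0. \<forall>k. F n k = F n0 k" using double_stab[OF F1 F2 col diag] by blast
  show "\<exists>k. \<forall>n\<ge>k. C n = C k"
  proof (intro exI allI impI)
    fix n assume n: "n \<ge> n0"
    show "C n = C n0"
    proof
      show "C n \<subseteq> C n0" using anti n by blast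
      have key: "\<forall>x\<in>C n0. (X ^^ j) x \<in> L \<longrightarrow> x \<in> C n" for j
      proof (induction j)
        case 0 then show ?case using LC by auto
      next
        case (Suc j)
        show ?case
        proof (intro ballI impI)
          fix x assume x: "x \<in> C n0" and xj: "(X ^^ Suc j) x \<in> L"
          have "X ((X ^^ j) x) \<in> lower_part Hr r" using xj unfolding L_def by simp
          then have "(X ^^ j) x \<in> S" unfolding S_def by (rule kerS)
          moreover have "(X ^^ j) x = (X ^^ j) x + 0" by simp
          ultimately have "(X ^^ j) x \<in> F n0 j" unfolding F_def using x asg_0[OF La] by blast
          moreover have "F n j = F n0 j" using n0 n by blast
          ultimately have "(X ^^ j) x \<in> F n j" by simp
          then obtain c l where cl: "c \<in> C n" "l \<in> L" "(X ^^ j) x = (X ^^ j) c + l" unfolding F_def by blast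
          have "c \<in> C n0" using anti n cl by blast
          then have y: "x - c \<in> C n0" using asg_diff[OF Ca] x by blast
          have "(X ^^ j) (x - c) = l" using cl(3) by (simp add: Xk_diff)
          then have "x - c \<in> C n" using Suc y cl(2) by simp
          then have "(x - c) + c \<in> C n" using asg_add[OF Ca] cl(1) by blast
          then show "x \<in> C n" by simp
        qed
      qed
      show "C n0 \<subseteq> C n"
      proof
        fix x assume "x \<in> C n0"
        obtain j where "(X ^^ j) x \<in> lower_part Hr r" using nilp by blast
        then show "x \<in> C n" using key \<open>x \<in> C n0\<close> unfolding L_def by blast
      qed
    qed
  qed
qed

end

theorem lemmaA3:
  fixes Gr :: "int \<Rightarrow> 'g::comm_ring_1 set"
    and sc :: "'g \<Rightarrow> 'h::ab_group_add \<Rightarrow> 'h"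
    and Hr :: "int \<Rightarrow> 'h set"
    and X :: "'h \<Rightarrow> 'h"
  assumes G: "graded_ring Gr"
    and G_pos: "\<forall>i>0. Gr i = {0}"
    and H: "graded_module Gr sc Hr"
    and H_art: "\<exists>N. \<forall>i\<ge>N. artinian_quot (Gr 0) sc (Hr i) {0}"
    and X_lin: "module_hom sc sc X"
    and X_deg: "\<exists>d<0. \<forall>i. \<forall>x\<in>Hr i. X x \<in> Hr (i + d)"
    and ker: "almost_artinian UNIV sc {x. X x = 0} (\<lambda>i. Hr i \<inter> {x. X x = 0})"
  shows "almost_artinian UNIV (poly_act sc X) UNIV Hr"
proof -
  obtain d where d: "d < 0" "\<forall>i. \<forall>x\<in>Hr i. X x \<in> Hr (i + d)" using X_deg by blast
  interpret ctx Gr sc Hr X d by (rule ctx.intro[OF G G_pos H X_lin d(1) d(2)])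
  obtain N where N: "\<forall>i\<ge>N. artinian_quot (Gr 0) sc (Hr i) {0}" using H_art by blast
  obtain r0 where r0: "artinian_quot UNIV sc {x. X x = 0} (lower_part (\<lambda>i. Hr i \<inter> {x. X x = 0}) r0)"
    using ker unfolding almost_artinian_def by blast
  define r where "r = max N r0"
  have Nr: "\<forall>i\<ge>r. artinian_quot (Gr 0) sc (Hr i) {0}" using N unfolding r_def by auto
  have "artinian_quot UNIV sc (P r (nat (- d))) (lower_part Hr r)"
    by (rule art_P[OF r0 _ Nr]) (simp add: r_def)
  then have "artinian_quot UNIV (poly_act sc X) UNIV (lower_part Hr r)" by (rule main_art)
  then show ?thesis unfolding almost_artinian_def by blast
qed


end
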